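(* For integers $d\ge 3$ and $n\ge 1.5(d+1)$, $$m^*(n,d)\le \min_{2\le i\le \lceil n/2\rceil}\Big\{m^*\big(\lceil n/i\rceil,d\big)+i\cdot m^*\big(\lceil n/i\rceil,\lfloor d/2\rfloor\big)\Big\}.$$
   Context: For a binary matrix $M$ and a nonempty set $S$ of its columns, $S$ is a stopping set if the submatrix formed by $S$ has no row with exactly one $1$; the stopping distance $s(M)$ is the minimum size of a stopping set ($+\infty$ if $M$ has no stopping set). For a positive integer $d$, $M$ is $d$-decodable if $s(M)\ge d+1$. For positive integers $n,d$ (with $d$ possibly exceeding $n$), $m^*(n,d)$ is the minimum $m$ such that an $m\times n$ $d$-decodable binary matrix exists. *)

theory Defs
  imports Complex_Main "HOL-Library.Extended_Nat"
begin

text \<open>An m x n binary matrix is represented by a function M :: nat => nat => bool,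
  where M r j (for r < m, j < n) says whether the entry in row r, column j is 1.
  Entries outside the index ranges are irrelevant.\<close>

definition stopping_set :: "nat \<Rightarrow> nat \<Rightarrow> (nat \<Rightarrow> nat \<Rightarrow> bool) \<Rightarrow> nat set \<Rightarrow> bool" where
  "stopping_set m n M S \<longleftrightarrow>
     S \<noteq> {} \<and> S \<subseteq> {..<n} \<and> (\<forall>r<m. card {j \<in> S. M r j} \<noteq> 1)"

definition stopping_distance :: "nat \<Rightarrow> nat \<Rightarrow> (nat \<Rightarrow> nat \<Rightarrow> bool) \<Rightarrow> enat" where
  "stopping_distance m n M = Inf ((\<lambda>S. enat (card S)) ` {S. stopping_set m n M S})"

definition decodable :: "nat \<Rightarrow> nat \<Rightarrow> nat \<Rightarrow> (nat \<Rightarrow> nat \<Rightarrow> bool) \<Rightarrow> bool" where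
  "decodable d m n M \<longleftrightarrow> stopping_distance m n M \<ge> enat (d + 1)"

definition m_star :: "nat \<Rightarrow> nat \<Rightarrow> nat" where
  "m_star n d = (LEAST m. \<exists>M. decodable d m n M)"

end

theory Submission
  imports Defs
begin

lemma decodable_iff: "decodable d m n M \<longleftrightarrow> (\<forall>S. stopping_set m n M S \<longrightarrow> d + 1 \<le> card S)"
  unfolding decodable_def stopping_distance_def by (auto simp: le_Inf_iff)

lemma ident: "decodable d n n (\<lambda>r j. r = j)"
  unfolding decodable_iff
proof (intro allI impI)
  fix S assume S: "stopping_set n n (\<lambda>r j. r = j) S"
  then obtain j where j: "j \<in> S" "j < n" by (auto simp: stopping_set_def)
  have "{j' \<in> S. j = j'} = {j}" using j by auto
  then show "d + 1 \<le> card S" using S j by (auto simp: stopping_set_def)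
qed

lemma mstar_ex: "\<exists>M. decodable d (m_star n d) n M"
  unfolding m_star_def by (rule LeastI_ex) (use ident in blast)

lemma mstar_le: "decodable d m n M \<Longrightarrow> m_star n d \<le> m"
  unfolding m_star_def by (rule Least_le) blast

lemma constr:
  assumes k: "0 < k" and nk: "n \<le> i * k"
  shows "m_star n d \<le> m_star k d + i * m_star k (d div 2)"
proof -
  obtain A where A: "decodable d (m_star k d) k A" using mstar_ex by blast
  obtain B where B: "decodable (d div 2) (m_star k (d div 2)) k B" using mstar_ex by blast
  define mA where "mA = m_star k d"
  define mB where "mB = m_star k (d div 2)"
  define M where "M = (\<lambda>r j. if r < mA then A r (j mod k)
      else (j div k = (r - mA) div mB \<and> B ((r - mA) mod mB) (j mod k)))"
  have key: "card {p \<in> (\<lambda>j. j mod k) ` X. P p} = card {j \<in> X. P (j mod k)}"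
    if "\<forall>j\<in>X. j div k = g" for X P g
  proof -
    have inj: "inj_on (\<lambda>j. j mod k) X"
      using that by (metis div_mult_mod_eq inj_onI)
    have "{p \<in> (\<lambda>j. j mod k) ` X. P p} = (\<lambda>j. j mod k) ` {j \<in> X. P (j mod k)}" by auto
    then show ?thesis using inj by (simp add: card_image inj_on_subset)
  qed
  have "decodable d (mA + i*mB) n M"
    unfolding decodable_iff
  proof (intro allI impI)
    fix S assume S: "stopping_set (mA + i*mB) n M S"
    hence Sne: "S \<noteq> {}" and Ssub: "S \<subseteq> {..<n}"
      and Srow: "\<forall>r<mA+i*mB. card {j\<in>S. M r j} \<noteq> 1" by (auto simp: stopping_set_def)
    have fin: "finite S" using Ssub finite_subset by blast
    have gl: "j div k < i" if "j \<in> S" for j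
    proof -
      have "j < i * k" using that Ssub nk by auto
      then show ?thesis by (simp add: less_mult_imp_div_less)
    qed
    have part: "d div 2 + 1 \<le> card (S \<inter> {j. j div k = g})" if ne: "S \<inter> {j. j div k = g} \<noteq> {}" for g
    proof -
      let ?X = "S \<inter> {j. j div k = g}"
      obtain j0 where "j0 \<in> ?X" using ne by blast
      hence g: "g < i" using gl by auto
      have "stopping_set mB k B ((\<lambda>j. j mod k) ` ?X)"
        unfolding stopping_set_def
      proof (intro conjI allI impI)
        show "(\<lambda>j. j mod k) ` ?X \<noteq> {}" using ne by blast
        show "(\<lambda>j. j mod k) ` ?X \<subseteq> {..<k}" using k by auto
        fix r assume r: "r < mB"
        define R where "R = mA + g*mB + r"
        have "g*mB + r < Suc g * mB" using r by simp
        also have "\<dots> \<le> i * mB" using g by (intro mult_le_mono1) simp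
        finally have R: "R < mA + i*mB" by (simp add: R_def)
        have Rd: "(R - mA) div mB = g" "(R - mA) mod mB = r" "\<not> R < mA" using r by (simp_all add: R_def)
        have "{j\<in>S. M R j} = {j \<in> ?X. B r (j mod k)}" by (auto simp: M_def Rd)
        then have "card {j \<in> ?X. B r (j mod k)} \<noteq> 1" using Srow R by metis
        then show "card {p \<in> (\<lambda>j. j mod k) ` ?X. B r p} \<noteq> 1" using key[of ?X g] by auto
      qed
      hence "d div 2 + 1 \<le> card ((\<lambda>j. j mod k) ` ?X)" using B by (simp add: decodable_iff mB_def)
      also have "\<dots> = card ?X" using key[of ?X g "\<lambda>_. True"] by (simp add: Int_def)
      finally show ?thesis .
    qed
    show "d + 1 \<le> card S"
    proof (rule ccontr)
      assume small: "\<not> d + 1 \<le> card S"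
      obtain j0 where j0: "j0 \<in> S" using Sne by blast
      define g where "g = j0 div k"
      have same: "\<forall>j\<in>S. j div k = g"
      proof (rule ccontr)
        assume "\<not> (\<forall>j\<in>S. j div k = g)"
        then obtain j1 where j1: "j1 \<in> S" "j1 div k \<noteq> g" by blast
        let ?X0 = "S \<inter> {j. j div k = g}"
        let ?X1 = "S \<inter> {j. j div k = j1 div k}"
        have "d div 2 + 1 \<le> card ?X0" using part j0 g_def by blast
        moreover have "d div 2 + 1 \<le> card ?X1" using part j1 by blast
        moreover have "card ?X0 + card ?X1 = card (?X0 \<union> ?X1)"
          using fin j1 by (intro card_Un_disjoint[symmetric]) auto
        moreover have "card (?X0 \<union> ?X1) \<le> card S" using fin by (intro card_mono) auto
        moreover have "d \<le> 2*(d div 2) + 1" by presburger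
        ultimately show False using small by linarith
      qed
      have "stopping_set mA k A ((\<lambda>j. j mod k) ` S)"
        unfolding stopping_set_def
      proof (intro conjI allI impI)
        show "(\<lambda>j. j mod k) ` S \<noteq> {}" using Sne by blast
        show "(\<lambda>j. j mod k) ` S \<subseteq> {..<k}" using k by auto
        fix r assume r: "r < mA"
        have "{j\<in>S. M r j} = {j\<in>S. A r (j mod k)}" using r by (auto simp: M_def)
        then have "card {j \<in> S. A r (j mod k)} \<noteq> 1" using Srow r by (metis trans_less_add1)
        then show "card {p \<in> (\<lambda>j. j mod k) ` S. A r p} \<noteq> 1" using key[OF same] by auto
      qed
      hence "d + 1 \<le> card ((\<lambda>j. j mod k) ` S)" using A by (simp add: decodable_iff mA_def)
      also have "\<dots> = card S" using key[OF same, of "\<lambda>_. True"] by simp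
      finally show False using small by simp
    qed
  qed
  then show ?thesis using mstar_le mA_def mB_def by simp
qed

theorem theorem5p1:
  fixes n d :: nat
  assumes "d \<ge> 3" and "real n \<ge> 1.5 * (real d + 1)"
  shows "m_star n d \<le>
    Min {m_star (nat \<lceil>real n / real i\<rceil>) d
         + i * m_star (nat \<lceil>real n / real i\<rceil>) (nat \<lfloor>real d / 2\<rfloor>)
         | i. 2 \<le> i \<and> i \<le> nat \<lceil>real n / 2\<rceil>}"
proof -
  let ?X = "{m_star (nat \<lceil>real n / real i\<rceil>) d
         + i * m_star (nat \<lceil>real n / real i\<rceil>) (nat \<lfloor>real d / 2\<rfloor>)
         | i. 2 \<le> i \<and> i \<le> nat \<lceil>real n / 2\<rceil>}"
  have n6: "real n \<ge> 6" using assms by simp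
  have fin: "finite ?X"
    by (rule finite_image_set, rule finite_subset[of _ "{..nat \<lceil>real n / 2\<rceil>}"]) auto
  have "2 \<le> nat \<lceil>real n / 2\<rceil>" using n6 by linarith
  hence ne: "?X \<noteq> {}" by blast
  have fl: "nat \<lfloor>real d / 2\<rfloor> = d div 2"
    by (metis floor_divide_of_nat_eq nat_int of_nat_numeral)
  show ?thesis
    unfolding Min_ge_iff[OF fin ne]
  proof (intro ballI)
    fix x assume "x \<in> ?X"
    then obtain i where i: "2 \<le> i" and x: "x = m_star (nat \<lceil>real n / real i\<rceil>) d
         + i * m_star (nat \<lceil>real n / real i\<rceil>) (nat \<lfloor>real d / 2\<rfloor>)" by blast
    define k where "k = nat \<lceil>real n / real i\<rceil>"
    have pos: "real n / real i > 0" using n6 i by simp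
    hence k0: "0 < k" unfolding k_def by linarith
    have "real n = real i * (real n / real i)" using i by simp
    also have "\<dots> \<le> real i * real k" unfolding k_def using i pos
    proof (intro mult_left_mono)
      have "real n / real i \<le> of_int \<lceil>real n / real i\<rceil>" by (rule le_of_int_ceiling)
      then show "real n / real i \<le> real (nat \<lceil>real n / real i\<rceil>)" using pos by linarith
    qed simp
    finally have "n \<le> i * k" by (metis of_nat_le_iff of_nat_mult)
    then show "m_star n d \<le> x" using constr[OF k0] unfolding x fl k_def by blast
  qed
qed

end
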